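(* For every $m\in\mathbb{N}$ and $\boldsymbol{X}\in\mathbb{N}^m$, $$\frac{\|\widehat{\boldsymbol{\mu}}_m\|_{1/2}^{1/2}}{\sqrt{2\pi m}}-\frac32\sqrt{\frac1{2\pi}}\frac{1}{m^{3/2}}N(\widehat{\boldsymbol{\mu}}_m)\le\hat{\mathfrak{R}}_m(\boldsymbol{X})\le\frac{\|\widehat{\boldsymbol{\mu}}_m\|_{1/2}^{1/2}}{\sqrt{2\pi m}}+\sqrt{\frac1{2\pi}}\frac{1}{m^{3/2}}N(\widehat{\boldsymbol{\mu}}_m),$$ where $N(\widehat{\boldsymbol{\mu}}_m):=\sum_{x\in\mathbb{N}:\,\widehat{\boldsymbol{\mu}}_m(x)>0}\widehat{\boldsymbol{\mu}}_m(x)^{-1/2}$.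
   Context: $\widehat{\boldsymbol{\mu}}_m(i)=\frac1m\sum_{t=1}^m\mathbb{I}\{X_t=i\}$. $\|\boldsymbol{\mu}\|_{1/2}=(\sum_i\sqrt{\boldsymbol{\mu}(i)})^2$. $\hat{\mathfrak{R}}_m(\boldsymbol{X})=\mathbb{E}_{\boldsymbol{\sigma}}\big[\sup_{f:\mathbb{N}\to\{0,1\}}\frac1m\sum_{t=1}^m\sigma_tf(X_t)\big]$ with $\boldsymbol{\sigma}$ uniform on $\{-1,1\}^m$. *)

theory Defs
  imports "HOL-Analysis.Analysis"
begin

text \<open>Sample X = (X 1, ..., X m) of natural numbers, encoded as X :: nat => nat
  on indices 1..m.\<close>

definition emp_dist :: "nat \<Rightarrow> (nat \<Rightarrow> nat) \<Rightarrow> nat \<Rightarrow> real" where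
  "emp_dist m X i = (\<Sum>t=1..m. (if X t = i then 1 else 0)) / real m"

definition half_norm :: "(nat \<Rightarrow> real) \<Rightarrow> real" where
  "half_norm mu = (\<Sum>i\<in>{i. 0 < mu i}. sqrt (mu i))\<^sup>2"

definition Nfun :: "(nat \<Rightarrow> real) \<Rightarrow> real" where
  "Nfun mu = (\<Sum>x\<in>{x. 0 < mu x}. mu x powr (-1/2))"

text \<open>Empirical Rademacher complexity of the class of all f : N -> {0,1};
  the expectation over sigma uniform on {-1,1}^m is the average over all
  sign vectors indexed by 1..m.\<close>
definition emp_rademacher :: "nat \<Rightarrow> (nat \<Rightarrow> nat) \<Rightarrow> real" where
  "emp_rademacher m X =
     (\<Sum>\<sigma>\<in>({1..m} \<rightarrow>\<^sub>E {-1::real, 1}).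
        (SUP f\<in>{f::nat \<Rightarrow> real. \<forall>x. f x \<in> {0,1}}.
           (1 / real m) * (\<Sum>t=1..m. \<sigma> t * f (X t)))) / 2 ^ m"

end

theory Submission
  imports Defs
begin


definition cc :: "nat \<Rightarrow> real" where "cc k = real ((2*k) choose k) / 4^k"
definition WP :: "nat \<Rightarrow> real" where "WP n = (\<Prod>k=1..n. (4*real k^2) / (4*real k^2 - 1))"

lemma cc_Suc: "cc (Suc k) = cc k * (2*real k+1) / (2*real k+2)"
proof -
  have e1: "real ((2*Suc k) choose Suc k) = fact (2*k+2) / (fact (k+1) * fact (k+1))"
    by (subst binomial_fact) auto
  have e2: "real ((2*k) choose k) = fact (2*k) / (fact k * fact k)"
    by (subst binomial_fact) auto
  have e3: "fact (2*k+2) = (fact (2*k) :: real) * (2*real k+1) * (2*real k+2)"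
    by (simp add: fact_Suc algebra_simps)
  have e4: "fact (k+1) = (fact k :: real) * (real k+1)" by (simp add: fact_Suc algebra_simps)
  have "cc (Suc k) = (fact (2*k)::real) * (2*real k+1) * (2*real k+2) / (((fact k::real) * (real k+1)) * ((fact k::real) * (real k+1))) / 4^(Suc k)"
    unfolding cc_def e1 e3 e4 by (simp only:)
  also have "\<dots> = ((fact (2*k)::real) / ((fact k::real) * fact k) / 4^k) * ((2*real k+1) * (2*real k+2) / ((real k+1)*(real k+1)*4))"
    by (simp only: divide_inverse inverse_mult_distrib power_Suc mult_ac)
  also have "(2*real k+1) * (2*real k+2) / ((real k+1)*(real k+1)*4) = (2*real k+1)/(2*real k+2)"
  proof -
    have eq: "(real k+1)*(real k+1)*4 = (2*real k+2)*(2*real k+2)" by (simp add: algebra_simps)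
    have "(2*real k+1) * (2*real k+2) / ((real k+1)*(real k+1)*4) = (2*real k+1) * (2*real k+2) / ((2*real k+2)*(2*real k+2))"
      by (simp only: eq)
    also have "\<dots> = (2*real k+1)/(2*real k+2)" by (subst mult_divide_mult_cancel_right) auto
    finally show ?thesis .
  qed
  finally show ?thesis unfolding cc_def e2 by simp
qed

lemma WP_Suc: "WP (Suc n) = WP n * (4*real (Suc n)^2) / (4*real (Suc n)^2 - 1)"
  unfolding WP_def by (simp add: prod.nat_ivl_Suc')

lemma four_sq: assumes "(1::real) \<le> x" shows "4*x^2 - 1 > 0" "1 \<le> 4*x^2/(4*x^2-1)"
proof -
  have "x*x \<ge> 1*1" by (rule mult_mono) (use assms in auto)
  then show *: "4*x^2 - 1 > 0" by (simp add: power2_eq_square)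
  then show "1 \<le> 4*x^2/(4*x^2-1)" by (simp add: le_divide_eq)
qed

lemma WP_pos: "WP n > 0"
  unfolding WP_def
proof (rule prod_pos)
  fix a assume "a \<in> {1..n}"
  then have "(1::real) \<le> real a" by simp
  with four_sq(1)[OF this] show "0 < 4 * real a ^ 2 / (4 * real a ^ 2 - 1)" by (intro divide_pos_pos) auto
qed

lemma alg1a: fixes a c W :: real assumes "a > 0"
  shows "(c*a/(a+1))^2 * (a+2) * (W * (a+1)^2/(a*(a+2))) = c^2*a*W"
proof -
  have p: "a \<noteq> 0" "a+1 \<noteq> 0" "a+2 \<noteq> 0" using assms by auto
  show ?thesis using p by (simp add: divide_simps) (simp add: algebra_simps power2_eq_square)
qed
lemma alg1: fixes x c W :: real assumes "x \<ge> 0"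
  shows "(c*(2*x+1)/(2*x+2))^2 * (2*(1+x)+1) * (W * (4*(1+x)^2)/(4*(1+x)^2-1)) = c^2*(2*x+1)*W"
proof -
  have a: "4*(1+x)^2-1 = (2*x+1)*((2*x+1)+2)" "4*(1+x)^2 = ((2*x+1)+1)^2" "2*x+2 = (2*x+1)+1"
     "2*(1+x)+1 = (2*x+1)+2" by (simp_all add: power2_eq_square algebra_simps)
  show ?thesis unfolding a(1) unfolding a(2-4) by (rule alg1a) (use assms in auto)
qed
lemma alg2: fixes x :: real assumes "x \<ge> 0"
  shows "(4*(x+2)^2)/((2*x+3)*(2*x+5)) * (2*x+5)/(2*x+4) \<le> (2*x+3)/(2*x+2)"
proof -
  define b where "b = 2*x+3"
  have e: "4*(x+2)^2 = (b+1)^2" "2*x+5 = b+2" "2*x+4 = b+1" "2*x+2 = b - 1" unfolding b_def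
    by (simp_all add: power2_eq_square algebra_simps)
  have p: "b \<noteq> 0" "b+1 \<noteq> 0" "b+2 \<noteq> 0" "b - 1 > 0" "b > 0" "b+1>0" using assms unfolding b_def by auto
  have "(b+1)^2/(b*(b+2)) * ((b+2)/(b+1)) = (b+1)/b" using p by (simp add: divide_simps) (simp add: algebra_simps power2_eq_square)
  also have "\<dots> \<le> b/(b-1)" using p by (simp add: divide_simps) (simp add: algebra_simps)
  finally show ?thesis unfolding e b_def[symmetric] by (simp only: times_divide_eq_right)
qed
lemma cc_WP: "cc k ^ 2 * (2*real k+1) * WP k = 1"
proof (induction k)
  case 0 then show ?case by (simp add: cc_def WP_def)
next
  case (Suc k)
  have "cc (Suc k) ^ 2 * (2*real (Suc k)+1) * WP (Suc k) = cc k ^ 2 * (2*real k+1) * WP k"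
    unfolding cc_Suc WP_Suc of_nat_Suc by (rule alg1) simp
  then show ?case using Suc by simp
qed

lemma WP_inc: "incseq WP"
proof (rule incseq_SucI)
  fix n
  have "1 \<le> (4*real (Suc n)^2) / (4*real (Suc n)^2 - 1)"
    by (rule four_sq) simp
  then have "WP n * 1 \<le> WP n * ((4*real (Suc n)^2) / (4*real (Suc n)^2 - 1))"
    using WP_pos[of n] by (intro mult_left_mono) auto
  then show "WP n \<le> WP (Suc n)" unfolding WP_Suc by simp
qed

lemma WP_lim: "WP \<longlonglongrightarrow> pi/2"
  using wallis unfolding WP_def .

lemma WP_le: "WP n \<le> pi/2" using incseq_le[OF WP_inc WP_lim] .

definition DD :: "nat \<Rightarrow> real" where "DD n = WP (Suc n) * (2*n+3)/(2*n+2)"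

lemma DD_dec: "decseq DD"
proof (rule decseq_SucI)
  fix n
  have e: "4*real (Suc (Suc n))^2 - 1 = (2*real n+3)*(2*real n+5)" "real (2*Suc n+3) = 2*real n+5"
    "real (2*Suc n+2) = 2*real n+4" "real (Suc(Suc n)) = real n+2"
    by (simp_all add: algebra_simps power2_eq_square)
  have d: "DD (Suc n) = WP (Suc n) * ((4*(real n+2)^2)/((2*real n+3)*(2*real n+5)) * (2*real n+5)/(2*real n+4))"
    unfolding DD_def WP_Suc[of "Suc n"] e(1-3) unfolding e(4) by (simp only: divide_inverse mult_ac)
  have "DD (Suc n) \<le> WP (Suc n) * ((2*real n+3)/(2*real n+2))"
    unfolding d using WP_pos[of "Suc n"] by (intro mult_left_mono alg2) auto
  then show "DD (Suc n) \<le> DD n" unfolding DD_def by (simp add: ac_simps)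
qed

lemma DD_lim: "DD \<longlonglongrightarrow> pi/2"
proof -
  have "(\<lambda>n. 1 + 1 / (2*real n+2)) \<longlonglongrightarrow> 1 + 0"
  proof (intro tendsto_add tendsto_const)
    have "(\<lambda>n. (1/2) * inverse (real (Suc n))) \<longlonglongrightarrow> (1/2) * 0"
      by (intro tendsto_mult tendsto_const LIMSEQ_inverse_real_of_nat)
    moreover have "(\<lambda>n. (1/2) * inverse (real (Suc n))) = (\<lambda>n. 1 / (2*real n+2))"
      by (rule ext) (simp add: field_simps)
    ultimately show "(\<lambda>n. 1 / (2*real n+2)) \<longlonglongrightarrow> 0" by (metis mult_zero_right)
  qed
  moreover have "(\<lambda>n. WP (Suc n)) \<longlonglongrightarrow> pi/2" using LIMSEQ_Suc[OF WP_lim] by simp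
  ultimately have "(\<lambda>n. WP (Suc n) * (1 + 1 / (2*real n+2))) \<longlonglongrightarrow> pi/2 * 1"
    by (intro tendsto_mult) (auto simp: o_def)
  moreover have "(\<lambda>n. WP (Suc n) * (1 + 1 / (2*real n+2))) = DD"
    by (rule ext) (simp add: DD_def field_simps)
  ultimately show ?thesis by simp
qed

lemma cc_lower: "cc k ^ 2 * (pi * (2*real k+1)) \<ge> 2"
proof -
  have "cc k ^ 2 * (2*real k+1) = 1 / WP k" using cc_WP[of k] WP_pos[of k] by (simp add: eq_divide_eq)
  then have "cc k ^ 2 * (pi * (2*real k+1)) = pi / WP k"
    by (metis mult.left_commute mult.assoc times_divide_eq_right mult_1_right)
  also have "\<dots> \<ge> 2" using WP_le[of k] WP_pos[of k] by (simp add: le_divide_eq)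
  finally show ?thesis .
qed

lemma cc_upper: assumes "k \<ge> 1" shows "cc k ^ 2 * (pi * k) \<le> 1"
proof -
  obtain n where k: "k = Suc n" using assms by (cases k) auto
  have "pi/2 \<le> DD n" using decseq_ge[OF DD_dec DD_lim] .
  moreover have "DD n = WP k * (2*real k+1)/(2*real k)" unfolding DD_def k by (simp add: algebra_simps)
  ultimately have "pi/2 \<le> WP k * (2*real k+1)/(2*real k)" by simp
  then have "pi * k \<le> WP k * (2*real k+1)" using assms by (simp add: pos_le_divide_eq)
  then have "cc k ^ 2 * (pi * k) \<le> cc k ^ 2 * (WP k * (2*real k+1))" by (rule mult_left_mono) simp
  also have "\<dots> = 1" using cc_WP[of k] by (simp add: ac_simps)
  finally show ?thesis .
qed


lemma even_core: fixes r y :: real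
  assumes r: "r \<ge> 1" and y: "y \<ge> 0" and up: "y^2 \<le> r^2" and lo: "y^2 * (r^2+1) \<ge> r^4"
  shows "r - 3/(2*r) \<le> y \<and> y \<le> r + 1/r"
proof
  have "y \<le> r" using power2_le_imp_le[OF up] r by simp
  moreover have "0 \<le> 1/r" using r by simp
  ultimately show "y \<le> r + 1/r" by linarith
next
  define u where "u = r^2"
  have u1: "u \<ge> 1" unfolding u_def using r by (simp add: one_le_power)
  have uu: "u*u \<ge> u" using u1 by (simp add: mult_right_mono[of 1 u u, simplified])
  show "r - 3/(2*r) \<le> y"
  proof (cases "r - 3/(2*r) \<le> 0")
    case True then show ?thesis using y by linarith
  next
    case False
    have rz: "r \<noteq> 0" using r by simp
    have z1: "r - 3/(2*r) = (2*u - 3)/(2*r)" unfolding u_def using rz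
      by (simp add: diff_divide_distrib power2_eq_square)
    have z2: "(r - 3/(2*r))^2 = (4*u*u - 12*u + 9)/(4*u)"
      unfolding z1 power_divide unfolding u_def by (simp add: power2_eq_square algebra_simps)
    have "(4*u*u - 12*u + 9)/(4*u) \<le> u*u/(u+1)"
    proof -
      have "(4*u*u - 12*u + 9)*(u+1) \<le> (u*u)*(4*u)"
      proof -
        have "(4*u*u - 12*u + 9)*(u+1) = u*u*(4*u) - 8*(u*u) - 3*u + 9" by (simp add: algebra_simps)
        then show ?thesis using uu u1 by linarith
      qed
      then show ?thesis using u1 by (simp add: divide_simps)
    qed
    also have "u*u/(u+1) \<le> y^2"
      using lo u1 unfolding u_def by (simp add: divide_simps power4_eq_xxxx power2_eq_square mult_ac)
    finally have "(r - 3/(2*r))^2 \<le> y^2" using z2 by simp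
    then show ?thesis using power2_le_imp_le y by blast
  qed
qed

lemma odd_core: fixes r y :: real
  assumes r: "r \<ge> 1" and y: "y \<ge> 0" and lo: "y^2 \<ge> r^2"
    and up: "(r^2 = 1 \<and> y^2 \<le> 4) \<or> (r^2 \<ge> 3 \<and> y^2 * (r^2 - 1) \<le> r^4)"
  shows "r - 3/(2*r) \<le> y \<and> y \<le> r + 1/r"
proof
  have "r \<le> y" using power2_le_imp_le[OF lo] y by simp
  moreover have "0 \<le> 3/(2*r)" using r by simp
  ultimately show "r - 3/(2*r) \<le> y" by linarith
next
  show "y \<le> r + 1/r"
  proof (cases "r^2 = 1")
    case True
    then have "r = 1" using r by (simp add: power2_eq_1_iff)
    moreover have "y^2 \<le> 2^2" using up True by simp
    ultimately show ?thesis using power2_le_imp_le[of y 2] by simp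
  next
    case False
    define u where "u = r^2"
    have u3: "u \<ge> 3" and lo2: "y^2 * (u - 1) \<le> u*u" using up False unfolding u_def
      by (auto simp: power4_eq_xxxx power2_eq_square mult_ac)
    have uu: "u*u \<ge> 3*u" using u3 by (simp add: mult_right_mono)
    have "y^2 \<le> u*u/(u-1)" using lo2 u3 by (simp add: le_divide_eq mult_ac)
    also have "u*u/(u-1) \<le> (u*u + 2*u + 1)/u"
    proof -
      have "u*u*u \<le> (u*u + 2*u + 1)*(u-1)"
      proof -
        have "(u*u + 2*u + 1)*(u-1) = u*u*u + u*u - u - 1" by (simp add: algebra_simps)
        then show ?thesis using uu u3 by linarith
      qed
      then show ?thesis using u3 by (simp add: divide_simps mult_ac)
    qed
    also have "(u*u + 2*u + 1)/u = (r + 1/r)^2"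
    proof -
      have rz: "r \<noteq> 0" using r by simp
      have "(r + 1/r) = (u + 1)/r" unfolding u_def using rz by (simp add: add_divide_distrib power2_eq_square)
      then have "(r + 1/r)^2 = (u+1)^2/u" by (simp add: power_divide u_def)
      then show ?thesis by (simp add: power2_eq_square algebra_simps)
    qed
    finally have "y^2 \<le> (r + 1/r)^2" .
    moreover have "0 \<le> r + 1/r" using r by simp
    ultimately show ?thesis using power2_le_imp_le by blast
  qed
qed


definition BB :: "nat \<Rightarrow> (int \<Rightarrow> real) \<Rightarrow> real" where
  "BB n g = (\<Sum>j\<le>n. real (n choose j) * g (2 * int j - int n))"

lemma BB_Suc: "BB (Suc n) g = BB n (\<lambda>x. g (x+1)) + BB n (\<lambda>x. g (x-1))"
proof -
  have "BB (Suc n) g = (\<Sum>j\<le>Suc n. real (Suc n choose j) * g (2 * int j - int n - 1))"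
    unfolding BB_def by (simp add: algebra_simps)
  also have "\<dots> = g (- int n - 1) + (\<Sum>j\<le>n. real (Suc n choose Suc j) * g (2 * int j - int n + 1))"
    by (subst sum.atMost_Suc_shift) (simp add: algebra_simps)
  also have "\<dots> = g (- int n - 1) + (\<Sum>j\<le>n. real (n choose j) * g (2 * int j - int n + 1))
      + (\<Sum>j\<le>n. real (n choose Suc j) * g (2 * int (Suc j) - int n - 1))"
    by (simp add: sum.distrib algebra_simps)
  also have "(\<Sum>j\<le>n. real (n choose Suc j) * g (2 * int (Suc j) - int n - 1))
      = (\<Sum>j\<le>Suc n. real (n choose j) * g (2 * int j - int n - 1)) - g (- int n - 1)"
    using sum.atMost_Suc_shift[of "\<lambda>j. real (n choose j) * g (2 * int j - int n - 1)" n] by simp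
  also have "(\<Sum>j\<le>Suc n. real (n choose j) * g (2 * int j - int n - 1)) = (\<Sum>j\<le>n. real (n choose j) * g (2 * int j - int n - 1))"
    by (simp add: sum.atMost_Suc)
  finally show ?thesis unfolding BB_def by (simp add: algebra_simps)
qed

lemma BB_add: "BB n (\<lambda>x. f x + h x) = BB n f + BB n h"
  unfolding BB_def by (simp add: sum.distrib algebra_simps)

lemma BB_cmult: "BB n (\<lambda>x. c * f x) = c * BB n f"
  unfolding BB_def by (simp add: sum_distrib_left algebra_simps)

lemma BB_const: "BB n (\<lambda>x. c) = c * 2^n"
proof -
  have "(\<Sum>j\<le>n. real (n choose j)) = real (\<Sum>j\<le>n. n choose j)" by simp
  also have "\<dots> = 2^n" by (simp add: choose_row_sum)
  finally have "(\<Sum>j\<le>n. real (n choose j)) = 2^n" .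
  then show ?thesis unfolding BB_def by (simp add: sum_distrib_left[symmetric] mult.commute)
qed

lemma BB_id: "BB n (\<lambda>x. real_of_int x) = 0"
proof (induction n)
  case 0 then show ?case by (simp add: BB_def)
next
  case (Suc n)
  have "BB (Suc n) (\<lambda>x. real_of_int x) = BB n (\<lambda>x. real_of_int x + 1) + BB n (\<lambda>x. real_of_int x + (-1))"
    unfolding BB_Suc by simp
  also have "\<dots> = 0" unfolding BB_add BB_const Suc by simp
  finally show ?case .
qed

definition delta0 :: "int \<Rightarrow> real" where "delta0 x = (if x = 0 then 1 else 0)"

lemma BB_delta0: "BB n delta0 = (if even n then real (n choose (n div 2)) else 0)"
proof (cases "even n")
  case True
  have "BB n delta0 = (\<Sum>j\<le>n. if j = n div 2 then real (n choose j) else 0)"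
    unfolding BB_def delta0_def
  proof (intro sum.cong refl)
    fix j assume "j \<in> {..n}"
    have "(2 * int j - int n = 0) = (j = n div 2)" using True by auto
    then show "real (n choose j) * (if 2 * int j - int n = 0 then 1 else 0) = (if j = n div 2 then real (n choose j) else 0)"
      by simp
  qed
  also have "\<dots> = real (n choose (n div 2))" by (simp add: sum.delta')
  finally show ?thesis using True by simp
next
  case False
  have "BB n delta0 = 0" unfolding BB_def delta0_def
  proof (intro sum.neutral ballI)
    fix j assume "j \<in> {..n}"
    have "2 * int j - int n \<noteq> 0" using False by presburger
    then show "real (n choose j) * (if 2 * int j - int n = 0 then 1 else 0) = 0" by simp
  qed
  then show ?thesis using False by simp
qed

lemma abs_shift: "\<bar>real_of_int (x+1)\<bar> + \<bar>real_of_int (x-1)\<bar> = 2 * \<bar>real_of_int x\<bar> + 2 * delta0 x"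
  unfolding delta0_def by (cases "x = 0"; cases "x > 0") auto

definition ee :: "nat \<Rightarrow> real" where "ee n = real n * cc (n div 2)"

lemma ee_Suc: "ee (Suc n) = ee n + (if even n then real (n choose (n div 2)) / 2^n else 0)"
proof (cases "even n")
  case True
  then obtain k where n: "n = 2*k" by blast
  have "real ((2*k) choose k) / 2^(2*k) = cc k" unfolding cc_def by (simp add: power_mult)
  then show ?thesis unfolding ee_def n by (simp add: algebra_simps)
next
  case False
  then obtain k where n: "n = 2*k+1" using oddE by blast
  have "Suc n div 2 = Suc k" "n div 2 = k" unfolding n by auto
  then have "ee (Suc n) = (2*real k+2) * cc (Suc k)" "ee n = (2*real k+1) * cc k"
    unfolding ee_def n by auto
  moreover have "(2*real k+2) * cc (Suc k) = (2*real k+1) * cc k" unfolding cc_Suc by simp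
  ultimately show ?thesis using False by simp
qed

lemma BB_abs: "BB n (\<lambda>x. \<bar>real_of_int x\<bar>) = 2^n * ee n"
proof (induction n)
  case 0 then show ?case by (simp add: BB_def ee_def)
next
  case (Suc n)
  have "BB (Suc n) (\<lambda>x. \<bar>real_of_int x\<bar>) = BB n (\<lambda>x. 2 * \<bar>real_of_int x\<bar> + 2 * delta0 x)"
    unfolding BB_Suc BB_add[symmetric] abs_shift ..
  also have "\<dots> = 2 * (2^n * ee n) + 2 * BB n delta0" unfolding BB_add BB_cmult Suc ..
  also have "\<dots> = 2^Suc n * ee (Suc n)" unfolding ee_Suc BB_delta0 by (simp add: algebra_simps)
  finally show ?case .
qed

lemma BB_max: "BB n (\<lambda>x. max 0 (real_of_int x)) = 2^n * ee n / 2"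
proof -
  have "BB n (\<lambda>x. max 0 (real_of_int x)) = BB n (\<lambda>x. (1/2) * real_of_int x + (1/2) * \<bar>real_of_int x\<bar>)"
    by (rule arg_cong[where f="BB n"]) (auto simp: max_def)
  also have "\<dots> = 2^n * ee n / 2" unfolding BB_add BB_cmult BB_id BB_abs by simp
  finally show ?thesis .
qed


lemma sum_PiE_insert:
  fixes F :: "('a \<Rightarrow> 'b) \<Rightarrow> real"
  assumes "finite U" "a \<notin> U" "finite S"
  shows "(\<Sum>\<sigma>\<in>insert a U \<rightarrow>\<^sub>E S. F \<sigma>) = (\<Sum>s\<in>S. \<Sum>\<tau>\<in>U \<rightarrow>\<^sub>E S. F (\<tau>(a := s)))"
proof -
  have "(\<Sum>\<sigma>\<in>insert a U \<rightarrow>\<^sub>E S. F \<sigma>) = (\<Sum>(s,\<tau>)\<in>S \<times> (U \<rightarrow>\<^sub>E S). F (\<tau>(a := s)))"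
    using assms
    by (intro sum.reindex_bij_witness[of _ "\<lambda>(y,g). g(a := y)" "\<lambda>g. (g a, g(a := undefined))"])
       (auto simp: PiE_def extensional_def)
  also have "\<dots> = (\<Sum>s\<in>S. \<Sum>\<tau>\<in>U \<rightarrow>\<^sub>E S. F (\<tau>(a := s)))"
    by (subst sum.cartesian_product) auto
  finally show ?thesis .
qed

lemma PiE_BB:
  fixes h :: "real \<Rightarrow> real"
  assumes "finite U" "T \<subseteq> U"
  shows "(\<Sum>\<sigma>\<in>U \<rightarrow>\<^sub>E {-1,1::real}. h (\<Sum>t\<in>T. \<sigma> t)) = 2^(card (U - T)) * BB (card T) (\<lambda>x. h (real_of_int x))"
  using assms
proof (induction U arbitrary: T h rule: finite_induct)
  case empty
  then show ?case by (simp add: BB_def)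
next
  case (insert a U)
  have fT: "finite T" using insert(1,4) finite_subset by blast
  have sw: "(\<Sum>\<sigma>\<in>insert a U \<rightarrow>\<^sub>E {-1,1::real}. h (\<Sum>t\<in>T. \<sigma> t))
      = (\<Sum>s\<in>{-1,1::real}. \<Sum>\<tau>\<in>U \<rightarrow>\<^sub>E {-1,1::real}. h (\<Sum>t\<in>T. (\<tau>(a := s)) t))"
    by (rule sum_PiE_insert[where F="\<lambda>\<sigma>. h (\<Sum>t\<in>T. \<sigma> t)"]) (use insert in auto)
  show ?case
  proof (cases "a \<in> T")
    case True
    have sub: "T - {a} \<subseteq> U" using insert True by auto
    have cT: "card T = Suc (card (T - {a}))" using True fT by (metis card_Suc_Diff1)
    have dU: "insert a U - T = U - (T - {a})" using True insert(2) by auto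
    have inner: "(\<Sum>\<tau>\<in>U \<rightarrow>\<^sub>E {-1,1::real}. h (\<Sum>t\<in>T. (\<tau>(a := s)) t))
        = 2^(card (U - (T - {a}))) * BB (card (T - {a})) (\<lambda>x. h (s + real_of_int x))" for s
    proof -
      have "(\<Sum>t\<in>T. (\<tau>(a := s)) t) = s + (\<Sum>t\<in>T - {a}. \<tau> t)" for \<tau> :: "'a \<Rightarrow> real"
      proof -
        have "(\<Sum>t\<in>T. (\<tau>(a := s)) t) = (\<tau>(a := s)) a + (\<Sum>t\<in>T - {a}. (\<tau>(a := s)) t)"
          using fT True by (rule sum.remove)
        also have "(\<Sum>t\<in>T - {a}. (\<tau>(a := s)) t) = (\<Sum>t\<in>T - {a}. \<tau> t)" by (rule sum.cong) auto
        finally show ?thesis by simp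
      qed
      then have "(\<Sum>\<tau>\<in>U \<rightarrow>\<^sub>E {-1,1::real}. h (\<Sum>t\<in>T. (\<tau>(a := s)) t))
          = (\<Sum>\<tau>\<in>U \<rightarrow>\<^sub>E {-1,1::real}. (\<lambda>y. h (s + y)) (\<Sum>t\<in>T - {a}. \<tau> t))" by simp
      also have "\<dots> = 2^(card (U - (T - {a}))) * BB (card (T - {a})) (\<lambda>x. h (s + real_of_int x))"
        by (rule insert.IH[OF sub])
      finally show ?thesis .
    qed
    have "(\<Sum>\<sigma>\<in>insert a U \<rightarrow>\<^sub>E {-1,1::real}. h (\<Sum>t\<in>T. \<sigma> t))
        = 2^(card (U - (T - {a}))) * (BB (card (T - {a})) (\<lambda>x. h (-1 + real_of_int x)) + BB (card (T - {a})) (\<lambda>x. h (1 + real_of_int x)))"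
      unfolding sw inner by (simp add: algebra_simps)
    also have "BB (card (T - {a})) (\<lambda>x. h (-1 + real_of_int x)) + BB (card (T - {a})) (\<lambda>x. h (1 + real_of_int x))
        = BB (card T) (\<lambda>x. h (real_of_int x))"
      unfolding cT BB_Suc by (simp add: algebra_simps)
    finally show ?thesis unfolding dU .
  next
    case False
    have sub: "T \<subseteq> U" using insert False by auto
    have dU: "card (insert a U - T) = Suc (card (U - T))"
    proof -
      have "insert a U - T = insert a (U - T)" using False by auto
      then show ?thesis using insert(1,2) by simp
    qed
    have inner: "(\<Sum>\<tau>\<in>U \<rightarrow>\<^sub>E {-1,1::real}. h (\<Sum>t\<in>T. (\<tau>(a := s)) t))
        = 2^(card (U - T)) * BB (card T) (\<lambda>x. h (real_of_int x))" for s
    proof -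
      have "(\<Sum>t\<in>T. (\<tau>(a := s)) t) = (\<Sum>t\<in>T. \<tau> t)" for \<tau> :: "'a \<Rightarrow> real"
        using False by (intro sum.cong) auto
      then show ?thesis using insert.IH[OF sub, of h] by simp
    qed
    show ?thesis unfolding sw inner dU by simp
  qed
qed



lemma ee_bound:
  assumes n: "n \<ge> 1"
  shows "sqrt n - 3/(2* sqrt n) \<le> ee n * sqrt (2*pi) / 2 \<and> ee n * sqrt (2*pi) / 2 \<le> sqrt n + 1/sqrt n"
proof -
  define k where "k = n div 2"
  define y where "y = ee n * sqrt (2*pi) / 2"
  define c2 where "c2 = cc k ^ 2"
  have y0: "y \<ge> 0" unfolding y_def ee_def cc_def by simp
  have y2: "y^2 = real n ^ 2 * c2 * pi / 2" unfolding y_def ee_def c2_def k_def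
    by (simp add: power_mult_distrib power_divide)
  have r1: "sqrt (real n) \<ge> 1" using n by simp
  have r2: "sqrt (real n) ^ 2 = real n" by simp
  have L: "c2 * (pi * (2*real k+1)) \<ge> 2" unfolding c2_def by (rule cc_lower)
  show ?thesis
  proof (cases "even n")
    case True
    then have nk: "real n = 2 * real k" unfolding k_def
    proof -
      have "n = 2 * (n div 2)" using True by simp
      then show "real n = 2 * real (n div 2)" by (metis of_nat_mult of_nat_numeral)
    qed
    then have k1: "k \<ge> 1" using n by simp
    have U: "c2 * (pi * k) \<le> 1" unfolding c2_def by (rule cc_upper[OF k1])
    have "y^2 \<le> sqrt (real n) ^ 2"
    proof -
      have "y^2 = real n * (c2 * (pi * k))" unfolding y2 nk by (simp add: power2_eq_square)
      also have "\<dots> \<le> real n * 1" using U by (intro mult_left_mono) auto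
      finally show ?thesis by simp
    qed
    moreover have "y^2 * (sqrt (real n) ^2 + 1) \<ge> sqrt (real n) ^ 4"
    proof -
      have "sqrt (real n) ^ 4 = real n ^ 2 * 1" by (simp add: power4_eq_xxxx power2_eq_square)
      also have "\<dots> \<le> real n ^ 2 * (c2 * (pi * (2*real k+1)) / 2)" using L by (intro mult_left_mono) auto
      also have "\<dots> = y^2 * (sqrt (real n) ^2 + 1)" unfolding y2 r2 nk by (simp add: algebra_simps)
      finally show ?thesis .
    qed
    ultimately show ?thesis using even_core[OF r1 y0] unfolding y_def by blast
  next
    case False
    then have "n = 2 * k + 1" unfolding k_def by simp
    then have nk: "real n = 2 * real k + 1" by simp
    have lo: "y^2 \<ge> sqrt (real n) ^ 2"
    proof -
      have "sqrt (real n) ^ 2 = real n * 1" by simp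
      also have "\<dots> \<le> real n * (c2 * (pi * (2*real k+1)) / 2)" using L by (intro mult_left_mono) auto
      also have "\<dots> = y^2" unfolding y2 nk by (simp add: power2_eq_square algebra_simps)
      finally show ?thesis .
    qed
    have up: "(sqrt (real n)^2 = 1 \<and> y^2 \<le> 4) \<or> (sqrt (real n)^2 \<ge> 3 \<and> y^2 * (sqrt (real n)^2 - 1) \<le> sqrt (real n)^4)"
    proof (cases "k = 0")
      case True
      then have "n = 1" using nk by simp
      moreover have "c2 = 1" unfolding c2_def cc_def True by simp
      ultimately show ?thesis using y2 pi_less_4 by simp
    next
      case False
      then have k1: "k \<ge> 1" by simp
      have U: "c2 * (pi * k) \<le> 1" unfolding c2_def by (rule cc_upper[OF k1])
      have "y^2 * (sqrt (real n)^2 - 1) = real n ^ 2 * (c2 * (pi * k))" unfolding y2 r2 nk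
        by (simp add: algebra_simps)
      also have "\<dots> \<le> real n ^ 2 * 1" using U by (intro mult_left_mono) auto
      also have "\<dots> = sqrt (real n)^4" by (simp add: power4_eq_xxxx power2_eq_square)
      finally show ?thesis using k1 nk by simp
    qed
    show ?thesis using odd_core[OF r1 y0 lo up] unfolding y_def by blast
  qed
qed


definition TT :: "nat \<Rightarrow> (nat \<Rightarrow> nat) \<Rightarrow> nat \<Rightarrow> nat set" where
  "TT m X i = {t \<in> {1..m}. X t = i}"

lemma sum_regroup:
  fixes \<sigma> f :: "nat \<Rightarrow> real"
  shows "(\<Sum>t=1..m. \<sigma> t * f (X t)) = (\<Sum>i\<in>X ` {1..m}. f i * (\<Sum>t\<in>TT m X i. \<sigma> t))"
proof -
  have "(\<Sum>t=1..m. \<sigma> t * f (X t)) = (\<Sum>i\<in>X ` {1..m}. \<Sum>t\<in>TT m X i. \<sigma> t * f (X t))"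
    unfolding TT_def by (rule sum.image_gen) simp
  also have "\<dots> = (\<Sum>i\<in>X ` {1..m}. f i * (\<Sum>t\<in>TT m X i. \<sigma> t))"
  proof (rule sum.cong[OF refl])
    fix i
    have "(\<Sum>t\<in>TT m X i. \<sigma> t * f (X t)) = (\<Sum>t\<in>TT m X i. \<sigma> t * f i)"
      unfolding TT_def by (rule sum.cong) auto
    moreover have "(\<Sum>t\<in>TT m X i. \<sigma> t * f i) = (\<Sum>t\<in>TT m X i. \<sigma> t) * f i"
      by (simp add: sum_distrib_right)
    ultimately show "(\<Sum>t\<in>TT m X i. \<sigma> t * f (X t)) = f i * (\<Sum>t\<in>TT m X i. \<sigma> t)"
      by (simp only: mult.commute)
  qed
  finally show ?thesis .
qed

lemma sup_eq:
  fixes \<sigma> :: "nat \<Rightarrow> real"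
  assumes m: "m \<ge> 1"
  shows "(SUP f\<in>{f::nat \<Rightarrow> real. \<forall>x. f x \<in> {0,1}}. (1 / real m) * (\<Sum>t=1..m. \<sigma> t * f (X t)))
       = (1 / real m) * (\<Sum>i\<in>X ` {1..m}. max 0 (\<Sum>t\<in>TT m X i. \<sigma> t))"
proof (rule cSup_eq_maximum)
  define f0 where "f0 = (\<lambda>i. if (\<Sum>t\<in>TT m X i. \<sigma> t) > 0 then 1 else (0::real))"
  have "f0 \<in> {f::nat \<Rightarrow> real. \<forall>x. f x \<in> {0,1}}" unfolding f0_def by auto
  moreover have "(1 / real m) * (\<Sum>t=1..m. \<sigma> t * f0 (X t)) = (1 / real m) * (\<Sum>i\<in>X ` {1..m}. max 0 (\<Sum>t\<in>TT m X i. \<sigma> t))"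
  proof -
    have "(\<Sum>t=1..m. \<sigma> t * f0 (X t)) = (\<Sum>i\<in>X ` {1..m}. f0 i * (\<Sum>t\<in>TT m X i. \<sigma> t))"
      by (rule sum_regroup)
    also have "\<dots> = (\<Sum>i\<in>X ` {1..m}. max 0 (\<Sum>t\<in>TT m X i. \<sigma> t))"
      unfolding f0_def by (rule sum.cong) auto
    finally show ?thesis by simp
  qed
  ultimately show "(1 / real m) * (\<Sum>i\<in>X ` {1..m}. max 0 (\<Sum>t\<in>TT m X i. \<sigma> t))
      \<in> (\<lambda>f. (1 / real m) * (\<Sum>t=1..m. \<sigma> t * f (X t))) ` {f::nat \<Rightarrow> real. \<forall>x. f x \<in> {0,1}}"
    by (metis (no_types, lifting) image_eqI)
next
  fix y assume "y \<in> (\<lambda>f. (1 / real m) * (\<Sum>t=1..m. \<sigma> t * f (X t))) ` {f::nat \<Rightarrow> real. \<forall>x. f x \<in> {0,1}}"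
  then obtain f where f: "\<forall>x. f x \<in> {0,1}" and y: "y = (1 / real m) * (\<Sum>t=1..m. \<sigma> t * f (X t))" by auto
  have "(\<Sum>i\<in>X ` {1..m}. f i * (\<Sum>t\<in>TT m X i. \<sigma> t)) \<le> (\<Sum>i\<in>X ` {1..m}. max 0 (\<Sum>t\<in>TT m X i. \<sigma> t))"
  proof (rule sum_mono)
    fix i
    show "f i * (\<Sum>t\<in>TT m X i. \<sigma> t) \<le> max 0 (\<Sum>t\<in>TT m X i. \<sigma> t)"
      using f[rule_format, of i] by auto
  qed
  then show "y \<le> (1 / real m) * (\<Sum>i\<in>X ` {1..m}. max 0 (\<Sum>t\<in>TT m X i. \<sigma> t))"
    unfolding y using m by (subst sum_regroup) (intro mult_left_mono, auto)
qed

lemma rad_eq: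
  assumes m: "m \<ge> 1"
  shows "emp_rademacher m X = (1 / real m) * (\<Sum>i\<in>X ` {1..m}. ee (card (TT m X i)) / 2)"
proof -
  have "emp_rademacher m X = (\<Sum>\<sigma>\<in>({1..m} \<rightarrow>\<^sub>E {-1::real, 1}).
      (1 / real m) * (\<Sum>i\<in>X ` {1..m}. max 0 (\<Sum>t\<in>TT m X i. \<sigma> t))) / 2 ^ m"
    unfolding emp_rademacher_def using sup_eq[OF m] by simp
  also have "\<dots> = (1 / real m) * (\<Sum>i\<in>X ` {1..m}. (\<Sum>\<sigma>\<in>({1..m} \<rightarrow>\<^sub>E {-1::real, 1}). max 0 (\<Sum>t\<in>TT m X i. \<sigma> t)) / 2 ^ m)"
  proof -
    let ?P = "{1..m} \<rightarrow>\<^sub>E {-1::real, 1}"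
    let ?g = "\<lambda>\<sigma> i. max 0 (\<Sum>t\<in>TT m X i. \<sigma> t)"
    have "(\<Sum>\<sigma>\<in>?P. (1 / real m) * (\<Sum>i\<in>X ` {1..m}. ?g \<sigma> i)) / 2 ^ m
        = (1 / real m) * ((\<Sum>\<sigma>\<in>?P. \<Sum>i\<in>X ` {1..m}. ?g \<sigma> i) / 2 ^ m)"
      by (simp add: sum_distrib_left)
    also have "(\<Sum>\<sigma>\<in>?P. \<Sum>i\<in>X ` {1..m}. ?g \<sigma> i) = (\<Sum>i\<in>X ` {1..m}. \<Sum>\<sigma>\<in>?P. ?g \<sigma> i)"
      by (rule sum.swap)
    also have "(\<Sum>i\<in>X ` {1..m}. \<Sum>\<sigma>\<in>?P. ?g \<sigma> i) / 2^m = (\<Sum>i\<in>X ` {1..m}. (\<Sum>\<sigma>\<in>?P. ?g \<sigma> i) / 2^m)"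
      by (rule sum_divide_distrib)
    finally show ?thesis .
  qed
  also have "\<dots> = (1 / real m) * (\<Sum>i\<in>X ` {1..m}. ee (card (TT m X i)) / 2)"
  proof (intro arg_cong[where f="\<lambda>x. (1 / real m) * x"] sum.cong refl)
    fix i
    have sub: "TT m X i \<subseteq> {1..m}" unfolding TT_def by auto
    then have cle: "card (TT m X i) \<le> m" using card_mono[of "{1..m}" "TT m X i"] by simp
    have "(\<Sum>\<sigma>\<in>({1..m} \<rightarrow>\<^sub>E {-1::real, 1}). max 0 (\<Sum>t\<in>TT m X i. \<sigma> t))
        = 2^(card ({1..m} - TT m X i)) * BB (card (TT m X i)) (\<lambda>x. max 0 (real_of_int x))"
      by (rule PiE_BB[OF _ sub]) simp
    also have "card ({1..m} - TT m X i) = m - card (TT m X i)"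
      using sub by (simp add: card_Diff_subset finite_subset)
    also have "BB (card (TT m X i)) (\<lambda>x. max 0 (real_of_int x)) = 2^card (TT m X i) * ee (card (TT m X i)) / 2"
      by (rule BB_max)
    finally have "(\<Sum>\<sigma>\<in>({1..m} \<rightarrow>\<^sub>E {-1::real, 1}). max 0 (\<Sum>t\<in>TT m X i. \<sigma> t))
        = (2^(m - card (TT m X i)) * 2^card (TT m X i)) * ee (card (TT m X i)) / 2" by simp
    also have "(2::real)^(m - card (TT m X i)) * 2^card (TT m X i) = 2^m"
      using cle by (simp flip: power_add)
    finally show "(\<Sum>\<sigma>\<in>({1..m} \<rightarrow>\<^sub>E {-1::real, 1}). max 0 (\<Sum>t\<in>TT m X i. \<sigma> t)) / 2 ^ m
        = ee (card (TT m X i)) / 2" by simp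
  qed
  finally show ?thesis .
qed

lemma emp_dist_eq: "emp_dist m X i = real (card (TT m X i)) / real m"
proof -
  have "(\<Sum>t=1..m. (if X t = i then 1 else 0::real)) = real (card (TT m X i))"
    unfolding TT_def by (simp add: sum.If_cases Int_def conj_commute)
  then show ?thesis unfolding emp_dist_def by simp
qed

lemma supp_eq: assumes "m \<ge> 1" shows "{i. 0 < emp_dist m X i} = X ` {1..m}"
proof -
  have "0 < emp_dist m X i \<longleftrightarrow> i \<in> X ` {1..m}" for i
  proof -
    have "0 < emp_dist m X i \<longleftrightarrow> card (TT m X i) > 0" unfolding emp_dist_eq using assms by (simp add: divide_pos_pos zero_less_divide_iff)
    also have "\<dots> \<longleftrightarrow> TT m X i \<noteq> {}" unfolding TT_def by (simp add: card_gt_0_iff)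
    also have "\<dots> \<longleftrightarrow> i \<in> X ` {1..m}" unfolding TT_def by auto
    finally show ?thesis .
  qed
  then show ?thesis by auto
qed


lemma term_bound:
  assumes n: "n \<ge> 1" and m: "m \<ge> 1"
  shows "sqrt (real n / real m) / sqrt (2 * pi * real m)
           - 3/2 * sqrt (1 / (2 * pi)) * (1 / real m powr (3/2)) * (real n / real m) powr (-1/2)
         \<le> (1 / real m) * (ee n / 2) \<and>
         (1 / real m) * (ee n / 2)
         \<le> sqrt (real n / real m) / sqrt (2 * pi * real m)
           + sqrt (1 / (2 * pi)) * (1 / real m powr (3/2)) * (real n / real m) powr (-1/2)"
proof -
  define s where "s = sqrt (2 * pi)"
  define r where "r = sqrt (real n)"
  define q where "q = sqrt (real m)"
  have s0: "s > 0" unfolding s_def by simp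
  have r0: "r > 0" unfolding r_def using n by simp
  have q0: "q > 0" unfolding q_def using m by simp
  have qq: "q * q = real m" unfolding q_def by simp
  have e1: "sqrt (real n / real m) / sqrt (2 * pi * real m) = r / (real m * s)"
  proof -
    have "sqrt (real n / real m) / sqrt (2 * pi * real m) = (r / q) / (s * q)"
      unfolding r_def q_def s_def by (simp add: real_sqrt_divide real_sqrt_mult)
    also have "\<dots> = r / ((q * q) * s)" by (simp add: field_simps)
    finally show ?thesis unfolding qq .
  qed
  have e2: "sqrt (1 / (2 * pi)) * (1 / real m powr (3/2)) * (real n / real m) powr (-1/2) = 1 / (real m * s * r)"
  proof -
    have a1: "sqrt (1 / (2 * pi)) = 1 / s" unfolding s_def by (simp add: real_sqrt_divide)
    have a2: "real m powr (3/2) = real m * q"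
    proof -
      have "real m powr (3/2) = real m powr (1 + 1/2)" by simp
      also have "\<dots> = real m powr 1 * real m powr (1/2)" by (rule powr_add)
      also have "\<dots> = real m * q" unfolding q_def using m by (simp add: powr_half_sqrt)
      finally show ?thesis .
    qed
    have a3: "(real n / real m) powr (-1/2) = q / r"
    proof -
      have "(real n / real m) powr (-1/2) = (real n / real m) powr (-(1/2))" by simp
      also have "\<dots> = 1 / (real n / real m) powr (1/2)" by (rule powr_minus_divide)
      also have "\<dots> = 1 / sqrt (real n / real m)" by (simp add: powr_half_sqrt)
      also have "\<dots> = q / r" unfolding q_def r_def by (simp add: real_sqrt_divide)
      finally show ?thesis .
    qed
    have "1 / s * (1 / (real m * q)) * (q / r) = 1 / (real m * s * r)"
      using q0 by (simp add: field_simps)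
    then show ?thesis unfolding a1 a2 a3 .
  qed
  have B: "r - 3/(2*r) \<le> ee n * s / 2 \<and> ee n * s / 2 \<le> r + 1/r"
    using ee_bound[OF n] unfolding r_def s_def .
  have ms: "real m * s > 0" using s0 m by simp
  have m0: "real m > 0" using m by simp
  have "r / (real m * s) - 3/2 * (1 / (real m * s * r)) = (r - 3/(2*r)) / (real m * s)"
    using r0 s0 m0 by (simp add: field_simps)
  also have "\<dots> \<le> (ee n * s / 2) / (real m * s)" using B ms by (intro divide_right_mono) auto
  also have "(ee n * s / 2) / (real m * s) = (1 / real m) * (ee n / 2)" using s0 by (simp add: field_simps)
  finally have L: "r / (real m * s) - 3/2 * (1 / (real m * s * r)) \<le> (1 / real m) * (ee n / 2)" .
  have "(1 / real m) * (ee n / 2) = (ee n * s / 2) / (real m * s)" using s0 by (simp add: field_simps)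
  also have "\<dots> \<le> (r + 1/r) / (real m * s)" using B ms by (intro divide_right_mono) auto
  also have "\<dots> = r / (real m * s) + 1 / (real m * s * r)" using r0 s0 m0 by (simp add: field_simps)
  finally have U: "(1 / real m) * (ee n / 2) \<le> r / (real m * s) + 1 / (real m * s * r)" .
  show ?thesis unfolding e1 mult.assoc[of "3/2"] e2 using L U by simp
qed


theorem corollary1:
  fixes m :: nat and X :: "nat \<Rightarrow> nat"
  assumes "m \<ge> 1"
  shows "sqrt (half_norm (emp_dist m X)) / sqrt (2 * pi * real m)
           - 3/2 * sqrt (1 / (2 * pi)) * (1 / real m powr (3/2)) * Nfun (emp_dist m X)
         \<le> emp_rademacher m X \<and>
         emp_rademacher m X
         \<le> sqrt (half_norm (emp_dist m X)) / sqrt (2 * pi * real m)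
           + sqrt (1 / (2 * pi)) * (1 / real m powr (3/2)) * Nfun (emp_dist m X)"
proof -
  define I where "I = X ` {1..m}"
  define nn where "nn i = card (TT m X i)" for i
  define a where "a i = sqrt (real (nn i) / real m) / sqrt (2 * pi * real m)" for i
  define b where "b i = sqrt (1 / (2 * pi)) * (1 / real m powr (3/2)) * (real (nn i) / real m) powr (-1/2)" for i
  define e where "e i = (1 / real m) * (ee (nn i) / 2)" for i
  have supp: "{i. 0 < emp_dist m X i} = I" unfolding I_def by (rule supp_eq[OF assms])
  have ed: "emp_dist m X i = real (nn i) / real m" for i unfolding nn_def by (rule emp_dist_eq)
  have n1: "nn i \<ge> 1" if "i \<in> I" for i
  proof -
    have "0 < emp_dist m X i" using that supp by auto
    then show ?thesis unfolding ed using assms by (simp add: zero_less_divide_iff)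
  qed
  have hn: "sqrt (half_norm (emp_dist m X)) = (\<Sum>i\<in>I. sqrt (real (nn i) / real m))"
    unfolding half_norm_def supp unfolding ed by (simp add: sum_nonneg)
  have nf: "Nfun (emp_dist m X) = (\<Sum>i\<in>I. (real (nn i) / real m) powr (-1/2))"
    unfolding Nfun_def supp unfolding ed ..
  have rad: "emp_rademacher m X = (\<Sum>i\<in>I. e i)"
    unfolding rad_eq[OF assms] e_def nn_def I_def by (simp add: sum_distrib_left)
  have lhs: "sqrt (half_norm (emp_dist m X)) / sqrt (2 * pi * real m)
           - 3/2 * sqrt (1 / (2 * pi)) * (1 / real m powr (3/2)) * Nfun (emp_dist m X)
           = (\<Sum>i\<in>I. a i - 3/2 * b i)"
    unfolding hn nf a_def b_def by (simp add: sum_divide_distrib sum_distrib_left sum_subtractf mult.assoc)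
  have rhs: "sqrt (half_norm (emp_dist m X)) / sqrt (2 * pi * real m)
           + sqrt (1 / (2 * pi)) * (1 / real m powr (3/2)) * Nfun (emp_dist m X)
           = (\<Sum>i\<in>I. a i + b i)"
    unfolding hn nf a_def b_def by (simp add: sum_divide_distrib sum_distrib_left sum.distrib mult.assoc)
  have tb: "a i - 3/2 * b i \<le> e i \<and> e i \<le> a i + b i" if "i \<in> I" for i
    using term_bound[OF n1[OF that] assms] unfolding a_def b_def e_def by (simp add: mult.assoc)
  show ?thesis unfolding lhs rhs rad
    using tb by (auto intro: sum_mono)
qed


end
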